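(* Let $t$ be a positive integer. Then (i) $\mathfrak{d}_t(0,0)=1$; and for all integers $n,k$: (ii) $\mathfrak{d}_t(n,k)=0$ if $n<0$, or $k<0$, or $k>\min\{\lfloor (n-1+t)/2\rfloor,n\}$; (iii) otherwise, if $n>0$, then $\mathfrak{d}_t(n,k)=\mathfrak{d}_t(n-1,k-1)+\mathfrak{d}_t(n-1,k)$.
   Context: Let $x_j=x^j/j!$ for $j\ge0$ in $\mathbb{R}[x]$, let $S=\operatorname{span}\{x_j\}_{j\ge1}$, and let $D:S\to\mathbb{R}[x]$ be the linear isomorphism $D(y)=y'+y''$; put $D^{-N}=(D^{-1})^N$. For each integer $N\ge1$, $D^{-N}(x_{t-1})\in\operatorname{span}\{x_j\}_{j=1}^{t-1+N}$, and real numbers $\mathfrak{d}_t(i+N-1,i)$ ($0\le i\le t+N-2$) are defined by $D^{-N}(x_{t-1})=\sum_{i=0}^{t+N-2}(-1)^i\,\mathfrak{d}_t(i+N-1,i)\,x_{t-1+N-i}$. For any integer pair $(n,k)$ not of the form $(i+N-1,i)$ with $N\ge1$ and $0\le i\le t+N-2$, set $\mathfrak{d}_t(n,k)=0$. *)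

theory Defs
  imports Complex_Main "HOL-Computational_Algebra.Polynomial"
begin

definition xj :: "nat \<Rightarrow> real poly" where
  "xj j = monom (1 / fact j) j"

definition Dop :: "real poly \<Rightarrow> real poly" where
  "Dop y = pderiv y + pderiv (pderiv y)"

definition Dinv :: "real poly \<Rightarrow> real poly" where
  "Dinv p = (THE y. coeff y 0 = 0 \<and> Dop y = p)"

definition DinvPow :: "nat \<Rightarrow> real poly \<Rightarrow> real poly" where
  "DinvPow N = Dinv ^^ N"

text \<open>Coefficient of x_j in p (w.r.t. the basis x_j = x^j/j!).\<close>
definition xcoeff :: "real poly \<Rightarrow> nat \<Rightarrow> real" where
  "xcoeff p j = fact j * coeff p j"

text \<open>d_t(n,k): for (n,k) = (i+N-1, i) with N \<ge> 1 and 0 \<le> i \<le> t+N-2,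
  D^{-N}(x_{t-1}) = sum_i (-1)^i d_t(i+N-1,i) x_{t-1+N-i}; otherwise 0.
  Here N = n-k+1 and i = k.\<close>
definition dfrak :: "nat \<Rightarrow> int \<Rightarrow> int \<Rightarrow> real" where
  "dfrak t n k =
     (let N = n - k + 1 in
      if 0 \<le> k \<and> 1 \<le> N \<and> k \<le> int t + N - 2
      then (-1) ^ nat k * xcoeff (DinvPow (nat N) (xj (t - 1))) (nat (int t - 1 + N - k))
      else 0)"

end

theory Submission
  imports Defs
begin

lemma Dop_add: "Dop (p + q) = Dop p + Dop q"
  by (simp add: Dop_def pderiv_add)
lemma Dop_diff: "Dop (p - q) = Dop p - Dop q"
  by (simp add: Dop_def pderiv_diff)
lemma Dop_smult: "Dop (smult c p) = smult c (Dop p)"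
  by (simp add: Dop_def pderiv_smult smult_add_right)
lemma Dop_sum: "Dop (sum f A) = (\<Sum>x\<in>A. Dop (f x))"
  by (induction A rule: infinite_finite_induct) (simp_all add: Dop_add, simp_all add: Dop_def)

lemma pderiv_xj: "pderiv (xj (Suc j)) = xj j"
  by (simp add: xj_def pderiv_monom field_simps del: of_nat_Suc)

lemma Dop_xj: "Dop (xj (Suc (Suc j))) = xj (Suc j) + xj j"
  by (simp add: Dop_def pderiv_xj)

fun Y :: "nat \<Rightarrow> real poly" where
  "Y 0 = xj 1"
| "Y (Suc m) = xj (Suc (Suc m)) - Y m"

lemma Y_props: "coeff (Y m) 0 = 0 \<and> Dop (Y m) = xj m"
proof (induction m)
  case 0
  have "Dop (xj 1) = xj 0"
    using pderiv_xj[of 0] by (simp add: Dop_def xj_def)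
  then show ?case by (simp add: xj_def)
next
  case (Suc m)
  then show ?case by (simp add: Dop_diff Dop_xj, simp add: xj_def)
qed

lemma Dop_exists: "\<exists>y. coeff y 0 = 0 \<and> Dop y = p"
proof -
  define y where "y = (\<Sum>n\<le>degree p. smult (coeff p n * fact n) (Y n))"
  have "coeff y 0 = 0" using Y_props by (simp add: y_def coeff_sum)
  moreover have "Dop y = p"
  proof -
    have "Dop y = (\<Sum>n\<le>degree p. smult (coeff p n * fact n) (xj n))"
      by (simp add: y_def Dop_sum Dop_smult Y_props)
    also have "\<dots> = (\<Sum>n\<le>degree p. monom (coeff p n) n)"
      by (simp add: xj_def smult_monom)
    also have "\<dots> = p" by (rule poly_as_sum_of_monoms)
    finally show ?thesis .
  qed
  ultimately show ?thesis by blast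
qed

lemma Dop_unique0:
  assumes "coeff y 0 = 0" "Dop y = 0" shows "y = 0"
proof -
  have "pderiv (y + pderiv y) = 0" using assms(2) by (simp add: Dop_def pderiv_add)
  then obtain h where h: "y + pderiv y = [:h:]" using pderiv_iszero by blast
  show ?thesis
  proof (cases "degree y = 0")
    case True
    then show ?thesis using assms(1) by (metis degree_0_id pCons_0_0)
  next
    case False
    have "coeff (y + pderiv y) (degree y) = coeff y (degree y)"
      by (simp add: coeff_pderiv coeff_eq_0)
    moreover have "coeff [:h:] (degree y) = 0" using False by (simp add: coeff_pCons split: nat.split)
    ultimately have "lead_coeff y = 0" using h by simp
    then show ?thesis by simp
  qed
qed

lemma Dinv_spec: "coeff (Dinv p) 0 = 0 \<and> Dop (Dinv p) = p"
proof -
  have "\<exists>!y. coeff y 0 = 0 \<and> Dop y = p"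
  proof -
    obtain y where y: "coeff y 0 = 0 \<and> Dop y = p" using Dop_exists by blast
    moreover have "z = y" if "coeff z 0 = 0 \<and> Dop z = p" for z
      using Dop_unique0[of "z - y"] that y by (simp add: Dop_diff)
    ultimately show ?thesis by blast
  qed
  then show ?thesis unfolding Dinv_def by (rule theI')
qed

lemma xcoeff_Dop: "xcoeff (Dop y) n = xcoeff y (n+1) + xcoeff y (n+2)"
proof -
  have d: "xcoeff (pderiv q) n = xcoeff q (Suc n)" for q :: "real poly" and n
    by (simp add: xcoeff_def coeff_pderiv)
  have a: "xcoeff (p + q) n = xcoeff p n + xcoeff q n" for p q :: "real poly" and n
    by (simp add: xcoeff_def algebra_simps)
  show ?thesis by (simp add: Dop_def a d)
qed

lemma downward_zero:
  fixes f :: "nat \<Rightarrow> real"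
  assumes "\<And>j. j \<ge> M \<Longrightarrow> f j + f (Suc j) = 0" "\<And>j. j \<ge> B \<Longrightarrow> f j = 0"
  shows "j \<ge> M \<Longrightarrow> f j = 0"
proof -
  have "\<forall>j. B - j = k \<longrightarrow> j \<ge> M \<longrightarrow> f j = 0" for k
  proof (induction k)
    case 0 then show ?case using assms(2) by auto
  next
    case (Suc k)
    show ?case
    proof (intro allI impI)
      fix j assume "B - j = Suc k" "j \<ge> M"
      then have "f (Suc j) = 0" using Suc by auto
      then show "f j = 0" using assms(1)[of j] \<open>j \<ge> M\<close> by simp
    qed
  qed
  then show "j \<ge> M \<Longrightarrow> f j = 0" by blast
qed


lemma xcoeff_xj: "xcoeff (xj m) j = (if j = m then 1 else 0)"
  by (simp add: xcoeff_def xj_def coeff_monom)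

lemma DinvPow_Suc: "DinvPow (Suc N) p = Dinv (DinvPow N p)"
  by (simp add: DinvPow_def)

lemma A_F1: "xcoeff (DinvPow (Suc N) p) 0 = 0"
  using Dinv_spec by (simp add: DinvPow_Suc xcoeff_def)

lemma A_F2: "xcoeff (DinvPow (Suc N) p) (m+1) + xcoeff (DinvPow (Suc N) p) (m+2) = xcoeff (DinvPow N p) m"
  using xcoeff_Dop[of "DinvPow (Suc N) p" m] Dinv_spec by (simp add: DinvPow_Suc)

lemma xcoeff_big: "j > degree p \<Longrightarrow> xcoeff p j = 0"
  by (simp add: xcoeff_def coeff_eq_0)

lemma A_F3: "j \<ge> t + N \<Longrightarrow> xcoeff (DinvPow N (xj (t - 1))) j = 0"
  if "t \<ge> 1"
proof (induction N arbitrary: j)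
  case 0 then show ?case using that by (simp add: DinvPow_def xcoeff_xj)
next
  case (Suc N)
  let ?f = "xcoeff (DinvPow (Suc N) (xj (t - 1)))"
  have "?f j = 0" if "j \<ge> Suc (t + N)" for j
  proof (rule downward_zero[where M = "Suc (t+N)" and B = "Suc (degree (DinvPow (Suc N) (xj (t - 1))))"])
    fix i assume i: "Suc (t + N) \<le> i"
    then obtain m where m: "i = Suc m" "m \<ge> t + N" by (cases i) auto
    show "?f i + ?f (Suc i) = 0" using A_F2[of N _ m] Suc.IH[OF m(2)] m(1) by simp
  next
    fix i assume "Suc (degree (DinvPow (Suc N) (xj (t - 1)))) \<le> i"
    then show "?f i = 0" by (intro xcoeff_big) simp
  qed (use that in simp)
  then show ?case using Suc.prems by simp
qed

lemma dfrak_nat: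
  assumes "t \<ge> 1"
  shows "dfrak t (int NN + int kk) (int kk) =
    (if kk \<le> t + NN - 1 then (-1) ^ kk * xcoeff (DinvPow (Suc NN) (xj (t - 1))) (t + NN - kk) else 0)"
proof -
  have e1: "nat (int NN + 1) = Suc NN" by simp
  have e2: "kk \<le> t + NN - 1 \<Longrightarrow> nat (int t - 1 + (int NN + 1) - int kk) = t + NN - kk"
    using assms by simp
  show ?thesis
    unfolding dfrak_def Let_def using assms e2
    by (auto simp: e1 simp del: of_nat_Suc)
qed

lemma dfrak_neg: "k < 0 \<or> k > n \<Longrightarrow> dfrak t n k = 0"
  by (auto simp: dfrak_def Let_def)

theorem lemma3p3:
  fixes t :: nat
  assumes "t \<ge> 1"
  shows "dfrak t 0 0 = 1
    \<and> (\<forall>n k :: int. (n < 0 \<or> k < 0 \<or> k > min \<lfloor>real_of_int (n - 1 + int t) / 2\<rfloor> n)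
          \<longrightarrow> dfrak t n k = 0)
    \<and> (\<forall>n k :: int. \<not> (n < 0 \<or> k < 0 \<or> k > min \<lfloor>real_of_int (n - 1 + int t) / 2\<rfloor> n)
          \<and> n > 0 \<longrightarrow> dfrak t n k = dfrak t (n - 1) (k - 1) + dfrak t (n - 1) k)"
proof -
  define A where "A N j = xcoeff (DinvPow N (xj (t - 1))) j" for N j
  have F0: "A 0 j = (if j = t - 1 then 1 else 0)" for j
    by (simp add: A_def DinvPow_def xcoeff_xj)
  have F1: "A (Suc N) 0 = 0" for N unfolding A_def by (rule A_F1)
  have F2: "A (Suc N) (m+1) + A (Suc N) (m+2) = A N m" for N m unfolding A_def by (rule A_F2)
  have F3: "j \<ge> t + N \<Longrightarrow> A N j = 0" for N j unfolding A_def using A_F3 assms by blast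
  have fl: "(k \<le> \<lfloor>real_of_int (n - 1 + int t) / 2\<rfloor>) = (2 * k \<le> n - 1 + int t)" for n k :: int
  proof -
    have "(k \<le> \<lfloor>real_of_int (n - 1 + int t) / 2\<rfloor>) = (real_of_int k \<le> real_of_int (n - 1 + int t) / 2)"
      by (rule le_floor_iff)
    also have "\<dots> = (real_of_int (2*k) \<le> real_of_int (n - 1 + int t))" by (simp add: mult.commute)
    also have "\<dots> = (2 * k \<le> n - 1 + int t)" by (rule of_int_le_iff)
    finally show ?thesis .
  qed
  have DN: "dfrak t (int NN + int kk) (int kk) =
    (if kk \<le> t + NN - 1 then (-1) ^ kk * A (Suc NN) (t + NN - kk) else 0)" for NN kk
    unfolding A_def by (rule dfrak_nat[OF assms])
  have P1: "dfrak t 0 0 = 1"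
  proof -
    have "A (Suc 0) t = 1"
      using F2[of 0 "t - 1"] F3[of "Suc 0" "Suc t"] F0[of "t-1"] assms by simp
    then show ?thesis using DN[of 0 0] by simp
  qed
  have P2: "dfrak t n k = 0" if "n < 0 \<or> k < 0 \<or> k > min \<lfloor>real_of_int (n - 1 + int t) / 2\<rfloor> n" for n k
  proof (cases "k < 0 \<or> k > n")
    case True then show ?thesis by (rule dfrak_neg)
  next
    case False
    then have "2 * k > n - 1 + int t" using that fl[of k n] by auto
    then show ?thesis unfolding dfrak_def Let_def by auto
  qed
  have P3: "dfrak t n k = dfrak t (n - 1) (k - 1) + dfrak t (n - 1) k"
    if c: "\<not> (n < 0 \<or> k < 0 \<or> k > min \<lfloor>real_of_int (n - 1 + int t) / 2\<rfloor> n)" "n > 0" for n k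
  proof -
    have k0: "k \<ge> 0" "k \<le> n" and kb: "2 * k \<le> n - 1 + int t" using c fl[of k n] by auto
    obtain kk NN where kN: "k = int kk" "n = int NN + int kk"
    proof -
      have "k = int (nat k)" "n = int (nat (n - k)) + int (nat k)" using k0 by auto
      then show ?thesis using that by blast
    qed
    have kb': "2 * kk \<le> NN + kk - 1 + t" "NN + kk > 0" using kb c(2) kN by auto
    obtain m where m: "t + NN - kk = Suc m" 
    proof -
      have "t + NN - kk > 0" using kb' assms by linarith
      then show ?thesis using that by (cases "t + NN - kk") auto
    qed
    have L: "dfrak t n k = (-1) ^ kk * A (Suc NN) (Suc m)"
      using DN[of NN kk] kN kb' m by simp
    have F2': "A (Suc NN) (Suc m) = A NN m - A (Suc NN) (m+2)" using F2[of NN m] by simp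
    show ?thesis
    proof (cases "kk = 0")
      case True
      then obtain NN' where NN': "NN = Suc NN'" using kb' by (cases NN) auto
      have r1: "dfrak t (n - 1) (k - 1) = 0" using True kN by (intro dfrak_neg) simp
      have r2: "dfrak t (n - 1) k = A NN m"
        using DN[of "NN'" 0] NN' kN True m by (simp add: add.commute)
      have "A (Suc NN) (m+2) = 0" using F3 m True by simp
      then show ?thesis using L r1 r2 F2' True by simp
    next
      case False
      then obtain k' where k': "kk = Suc k'" by (cases kk) auto
      have r1: "dfrak t (n - 1) (k - 1) = (-1) ^ k' * A (Suc NN) (m + 2)"
      proof -
        have "n - 1 = int NN + int k'" "k - 1 = int k'" using kN k' by auto
        moreover have "k' \<le> t + NN - 1" "t + NN - k' = m + 2" using kb' k' m by auto
        ultimately show ?thesis using DN[of NN k'] by simp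
      qed
      have r2: "dfrak t (n - 1) k = (-1) ^ kk * A NN m"
      proof (cases "NN = 0")
        case True
        then have "dfrak t (n - 1) k = 0" using kN by (intro dfrak_neg) simp
        moreover have "A NN m = 0" using F0 True m k' by auto
        ultimately show ?thesis by simp
      next
        case False
        then obtain NN' where NN': "NN = Suc NN'" by (cases NN) auto
        have nn: "n - 1 = int NN' + int kk" using kN NN' by simp
        show ?thesis
        proof (cases "kk \<le> t + NN' - 1")
          case True
          then have "t + NN' - kk = m" using m NN' by auto
          then show ?thesis using DN[of NN' kk] True nn kN NN' by simp
        next
          case False
          then have "m = 0" using m NN' kb' by auto
          then show ?thesis using DN[of NN' kk] False nn kN NN' F1 by simp
        qed
      qed
      show ?thesis using L r1 r2 F2' k' by (simp add: algebra_simps)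
    qed
  qed
  show ?thesis using P1 P2 P3 by blast
qed

end
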